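(* Let $G=(V,E)$ be a finite simple graph with no isolated vertices and no isolated edges, whose vertices operate independently, vertex $v$ with probability $p_v$, and let $q_v=1-p_v$, $\mathbf{p}=(p_v)_{v\in V}$. Let $A$ be any set of vertices of $G$ each of which is adjacent to a vertex of degree $1$. Then \[ \operatorname{DRel}(G,\mathbf{p})=\sum_{J\subseteq V\setminus A}(-1)^{|J|}\prod_{v\in N_G[J]}q_v. \]
   Context: $\operatorname{DRel}(G,\mathbf{p})$ is the probability that the set of operating vertices is a dominating set of $G$ (every vertex not in the set is adjacent to a vertex in it); edges never fail. $N_G[J]$ is the closed neighbourhood of $J$ (vertices in $J$ or adjacent to a vertex of $J$). An isolated edge is an edge both of whose endpoints have degree $1$. *)

theory Defs
  imports Complex_Main
begin

definition simple_graph :: "'a set \<Rightarrow> ('a \<Rightarrow> 'a \<Rightarrow> bool) \<Rightarrow> bool" where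
  "simple_graph V E \<longleftrightarrow> finite V \<and> (\<forall>u v. E u v \<longrightarrow> u \<in> V \<and> v \<in> V)
     \<and> (\<forall>u v. E u v \<longrightarrow> E v u) \<and> (\<forall>v. \<not> E v v)"

definition degree :: "'a set \<Rightarrow> ('a \<Rightarrow> 'a \<Rightarrow> bool) \<Rightarrow> 'a \<Rightarrow> nat" where
  "degree V E v = card {u \<in> V. E v u}"

definition no_isolated_vertices :: "'a set \<Rightarrow> ('a \<Rightarrow> 'a \<Rightarrow> bool) \<Rightarrow> bool" where
  "no_isolated_vertices V E \<longleftrightarrow> (\<forall>v\<in>V. degree V E v \<noteq> 0)"

definition no_isolated_edges :: "'a set \<Rightarrow> ('a \<Rightarrow> 'a \<Rightarrow> bool) \<Rightarrow> bool" where
  "no_isolated_edges V E \<longleftrightarrow>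
     (\<forall>u\<in>V. \<forall>v\<in>V. E u v \<longrightarrow> \<not> (degree V E u = 1 \<and> degree V E v = 1))"

definition dominating :: "'a set \<Rightarrow> ('a \<Rightarrow> 'a \<Rightarrow> bool) \<Rightarrow> 'a set \<Rightarrow> bool" where
  "dominating V E S \<longleftrightarrow> S \<subseteq> V \<and> (\<forall>v\<in>V. v \<notin> S \<longrightarrow> (\<exists>u\<in>S. E v u))"

definition closed_nbhd :: "'a set \<Rightarrow> ('a \<Rightarrow> 'a \<Rightarrow> bool) \<Rightarrow> 'a set \<Rightarrow> 'a set" where
  "closed_nbhd V E J = J \<union> {v \<in> V. \<exists>u\<in>J. E v u}"

text \<open>Domination reliability: probability that the set of operating vertices
  (vertex v operating independently with probability p v) is dominating.\<close>
definition DRel :: "'a set \<Rightarrow> ('a \<Rightarrow> 'a \<Rightarrow> bool) \<Rightarrow> ('a \<Rightarrow> real) \<Rightarrow> real" where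
  "DRel V E p = (\<Sum>S\<in>{S. S \<subseteq> V \<and> dominating V E S}.
      (\<Prod>v\<in>S. p v) * (\<Prod>v\<in>V - S. 1 - p v))"

end

theory Submission
  imports Defs
begin

lemma cn_union: "closed_nbhd V E (J \<union> K) = closed_nbhd V E J \<union> closed_nbhd V E K"
  unfolding closed_nbhd_def by auto

lemma cn_subset: "J \<subseteq> V \<Longrightarrow> closed_nbhd V E J \<subseteq> V"
  unfolding closed_nbhd_def by auto

lemma cn_UN: "closed_nbhd V E X = (\<Union>v\<in>X. closed_nbhd V E {v})"
  unfolding closed_nbhd_def by auto

lemma sum_Pow_insert:
  fixes g :: "'a set \<Rightarrow> real"
  assumes "finite W" "x \<notin> W"
  shows "(\<Sum>J\<in>Pow (insert x W). g J) = (\<Sum>J\<in>Pow W. g J) + (\<Sum>J\<in>Pow W. g (insert x J))"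
proof -
  have d: "Pow W \<inter> insert x ` Pow W = {}" using assms by auto
  have i: "inj_on (insert x) (Pow W)" unfolding inj_on_def by (metis PowD insert_ident subsetD assms(2))
  have "(\<Sum>J\<in>Pow (insert x W). g J) = (\<Sum>J\<in>Pow W. g J) + (\<Sum>J\<in>insert x ` Pow W. g J)"
    unfolding Pow_insert using assms d by (intro sum.union_disjoint) auto
  also have "(\<Sum>J\<in>insert x ` Pow W. g J) = (\<Sum>J\<in>Pow W. g (insert x J))"
    using sum.reindex[OF i] by simp
  finally show ?thesis .
qed

lemma cancel_step:
  fixes q :: "'a \<Rightarrow> real"
  assumes fin: "finite V" and aU: "a \<in> V - B" and wU: "w \<in> V - B" and wa: "w \<noteq> a"
    and sub: "closed_nbhd V E {w} \<subseteq> closed_nbhd V E {a}"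
  shows "(\<Sum>J\<in>Pow (V - B). (-1) ^ card J * (\<Prod>v\<in>closed_nbhd V E J. q v))
       = (\<Sum>J\<in>Pow (V - insert a B). (-1) ^ card J * (\<Prod>v\<in>closed_nbhd V E J. q v))"
proof -
  define F where "F J = (-1::real) ^ card J * (\<Prod>v\<in>closed_nbhd V E J. q v)" for J
  define U where "U = V - insert a B"
  define U2 where "U2 = U - {w}"
  have finU: "finite U" "finite U2" using fin by (auto simp: U_def U2_def)
  have VB: "V - B = insert a U" using aU by (auto simp: U_def)
  have aU2: "a \<notin> U" "a \<notin> U2" "w \<notin> U2" by (auto simp: U_def U2_def)
  have UU2: "U = insert w U2" using wU wa by (auto simp: U_def U2_def)
  have zero: "(\<Sum>J\<in>Pow U. F (insert a J)) = 0"
  proof -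
    have "(\<Sum>J\<in>Pow U. F (insert a J)) = (\<Sum>J\<in>Pow U2. F (insert a J)) + (\<Sum>J\<in>Pow U2. F (insert a (insert w J)))"
      unfolding UU2 using sum_Pow_insert[OF finU(2) aU2(3)] by simp
    also have "(\<Sum>J\<in>Pow U2. F (insert a (insert w J))) = (\<Sum>J\<in>Pow U2. - F (insert a J))"
    proof (rule sum.cong)
      fix J assume J: "J \<in> Pow U2"
      have fJ: "finite J" using J finU(2) finite_subset by auto
      have c: "card (insert a (insert w J)) = Suc (card (insert a J))"
        using J aU2 wa fJ by (auto simp: card_insert_if)
      have "closed_nbhd V E (insert a (insert w J)) = closed_nbhd V E {w} \<union> closed_nbhd V E (insert a J)"
        using cn_union[of V E "{w}" "insert a J"] by (simp add: insert_commute)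
      also have "\<dots> = closed_nbhd V E (insert a J)"
        using sub cn_union[of V E "{a}" J] by auto
      finally show "F (insert a (insert w J)) = - F (insert a J)"
        unfolding F_def using c by simp
    qed simp
    finally show ?thesis by (simp add: sum_negf)
  qed
  have "(\<Sum>J\<in>Pow (V - B). F J) = (\<Sum>J\<in>Pow U. F J) + (\<Sum>J\<in>Pow U. F (insert a J))"
    unfolding VB using sum_Pow_insert[OF finU(1) aU2(1)] by simp
  then show ?thesis using zero unfolding F_def U_def by simp
qed

lemma indicator_dom:
  assumes sg: "simple_graph V E" and S: "S \<subseteq> V"
  shows "(if dominating V E S then 1 else 0 :: real)
     = (\<Sum>X\<in>Pow V. (-1) ^ card X * (if S \<inter> closed_nbhd V E X = {} then 1 else 0))"
proof -
  have fin: "finite V" using sg by (simp add: simple_graph_def)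
  have sym: "\<And>u v. E u v \<Longrightarrow> E v u" using sg by (simp add: simple_graph_def)
  define I where "I v = (if S \<inter> closed_nbhd V E {v} = {} then 1 else 0 :: real)" for v
  have dom: "dominating V E S \<longleftrightarrow> (\<forall>v\<in>V. S \<inter> closed_nbhd V E {v} \<noteq> {})"
    using S sym unfolding dominating_def closed_nbhd_def by blast
  have lhs: "(if dominating V E S then 1 else 0 :: real) = (\<Prod>v\<in>V. 1 - I v)"
  proof (cases "dominating V E S")
    case True
    then show ?thesis using dom by (simp add: I_def)
  next
    case False
    then obtain v where "v \<in> V" "S \<inter> closed_nbhd V E {v} = {}" using dom by blast
    then have "(\<Prod>v\<in>V. 1 - I v) = 0" using fin by (subst prod_zero_iff) (auto simp: I_def intro!: bexI[of _ v])
    then show ?thesis using False by simp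
  qed
  have prodI: "(\<Prod>v\<in>X. I v) = (if S \<inter> closed_nbhd V E X = {} then 1 else 0)" if "X \<in> Pow V" for X
  proof -
    have fX: "finite X" using that fin finite_subset by auto
    show ?thesis
    proof (cases "S \<inter> closed_nbhd V E X = {}")
      case True
      then have "\<forall>v\<in>X. I v = 1" using cn_UN[of V E X] by (auto simp: I_def)
      then show ?thesis using True by simp
    next
      case False
      then obtain v where "v \<in> X" "S \<inter> closed_nbhd V E {v} \<noteq> {}" using cn_UN[of V E X] by auto
      then have "(\<Prod>v\<in>X. I v) = 0" using fX by (subst prod_zero_iff) (auto simp: I_def)
      then show ?thesis using False by simp
    qed
  qed
  have "(\<Prod>v\<in>V. 1 - I v) = (\<Sum>X\<in>Pow V. (-1) ^ card X * (\<Prod>x\<in>X. I x) * (\<Prod>x\<in>V-X. 1))"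
    by (rule prod_diff_conv_sum[OF fin])
  also have "\<dots> = (\<Sum>X\<in>Pow V. (-1) ^ card X * (if S \<inter> closed_nbhd V E X = {} then 1 else 0))"
    by (rule sum.cong) (auto simp: prodI)
  finally show ?thesis using lhs by simp
qed

lemma avoid_sum:
  fixes p :: "'a \<Rightarrow> real"
  assumes fin: "finite V" and N: "N \<subseteq> V"
  shows "(\<Sum>S\<in>Pow V. ((\<Prod>v\<in>S. p v) * (\<Prod>v\<in>V - S. 1 - p v)) * (if S \<inter> N = {} then 1 else 0))
      = (\<Prod>v\<in>N. 1 - p v)"
proof -
  have "(\<Sum>S\<in>Pow V. ((\<Prod>v\<in>S. p v) * (\<Prod>v\<in>V - S. 1 - p v)) * (if S \<inter> N = {} then 1 else 0))
      = (\<Sum>S\<in>Pow V. if S \<inter> N = {} then (\<Prod>v\<in>S. p v) * (\<Prod>v\<in>V - S. 1 - p v) else 0)"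
    by (rule sum.cong) auto
  also have "\<dots> = (\<Sum>S\<in>{S\<in>Pow V. S \<inter> N = {}}. (\<Prod>v\<in>S. p v) * (\<Prod>v\<in>V - S. 1 - p v))"
    by (rule sum.inter_filter[symmetric]) (use fin in simp)
  also have "{S\<in>Pow V. S \<inter> N = {}} = Pow (V - N)" by auto
  also have "(\<Sum>S\<in>Pow (V - N). (\<Prod>v\<in>S. p v) * (\<Prod>v\<in>V - S. 1 - p v))
      = (\<Sum>S\<in>Pow (V - N). (\<Prod>v\<in>S. p v) * (\<Prod>v\<in>(V - N) - S. 1 - p v)) * (\<Prod>v\<in>N. 1 - p v)"
    unfolding sum_distrib_right
  proof (rule sum.cong)
    fix S assume S: "S \<in> Pow (V - N)"
    have e: "V - S = ((V - N) - S) \<union> N" using S N by auto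
    have fN: "finite N" using fin N finite_subset by auto
    have "(\<Prod>v\<in>V - S. 1 - p v) = (\<Prod>v\<in>((V - N) - S) \<union> N. 1 - p v)" using e by simp
    also have "\<dots> = (\<Prod>v\<in>(V - N) - S. 1 - p v) * (\<Prod>v\<in>N. 1 - p v)"
      by (rule prod.union_disjoint) (use fin fN in auto)
    finally have "(\<Prod>v\<in>V - S. 1 - p v) = (\<Prod>v\<in>(V - N) - S. 1 - p v) * (\<Prod>v\<in>N. 1 - p v)" .
    then show "(\<Prod>v\<in>S. p v) * (\<Prod>v\<in>V - S. 1 - p v) =
       (\<Prod>v\<in>S. p v) * (\<Prod>v\<in>(V - N) - S. 1 - p v) * (\<Prod>v\<in>N. 1 - p v)" by simp
  qed simp
  also have "(\<Sum>S\<in>Pow (V - N). (\<Prod>v\<in>S. p v) * (\<Prod>v\<in>(V - N) - S. 1 - p v)) = (\<Prod>v\<in>V - N. p v + (1 - p v))"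
    by (rule prod_add[symmetric]) (use fin in simp)
  also have "\<dots> = 1" by simp
  finally show ?thesis by simp
qed

lemma drel_full:
  assumes sg: "simple_graph V E"
  shows "DRel V E p = (\<Sum>J\<in>Pow V. (-1) ^ card J * (\<Prod>v\<in>closed_nbhd V E J. 1 - p v))"
proof -
  have fin: "finite V" using sg by (simp add: simple_graph_def)
  define P where "P S = (\<Prod>v\<in>S. p v) * (\<Prod>v\<in>V - S. 1 - p v)" for S
  have "DRel V E p = (\<Sum>S\<in>{S\<in>Pow V. dominating V E S}. P S)"
    unfolding DRel_def P_def by (rule sum.cong) auto
  also have "\<dots> = (\<Sum>S\<in>Pow V. if dominating V E S then P S else 0)"
    by (rule sum.inter_filter) (use fin in simp)
  also have "\<dots> = (\<Sum>S\<in>Pow V. P S * (if dominating V E S then 1 else 0))"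
    by (rule sum.cong) auto
  also have "\<dots> = (\<Sum>S\<in>Pow V. \<Sum>X\<in>Pow V. P S * ((-1) ^ card X * (if S \<inter> closed_nbhd V E X = {} then 1 else 0)))"
    by (rule sum.cong) (auto simp: indicator_dom[OF sg] sum_distrib_left)
  also have "\<dots> = (\<Sum>X\<in>Pow V. \<Sum>S\<in>Pow V. P S * ((-1) ^ card X * (if S \<inter> closed_nbhd V E X = {} then 1 else 0)))"
    by (rule sum.swap)
  also have "\<dots> = (\<Sum>X\<in>Pow V. (-1) ^ card X * (\<Sum>S\<in>Pow V. P S * (if S \<inter> closed_nbhd V E X = {} then 1 else 0)))"
    by (rule sum.cong) (auto simp: sum_distrib_left mult_ac)
  also have "\<dots> = (\<Sum>J\<in>Pow V. (-1) ^ card J * (\<Prod>v\<in>closed_nbhd V E J. 1 - p v))"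
    by (rule sum.cong) (auto simp: P_def avoid_sum[OF fin cn_subset])
  finally show ?thesis .
qed

theorem corollary3:
  fixes V :: "'a set" and E :: "'a \<Rightarrow> 'a \<Rightarrow> bool" and p :: "'a \<Rightarrow> real" and A :: "'a set"
  assumes "simple_graph V E"
    and "no_isolated_vertices V E"
    and "no_isolated_edges V E"
    and "\<forall>v\<in>V. 0 \<le> p v \<and> p v \<le> 1"
    and "A \<subseteq> V"
    and "\<forall>a\<in>A. \<exists>w\<in>V. E a w \<and> degree V E w = 1"
  shows "DRel V E p = (\<Sum>J\<in>Pow (V - A). (-1) ^ card J * (\<Prod>v\<in>closed_nbhd V E J. 1 - p v))"
proof -
  have fin: "finite V" using assms(1) by (simp add: simple_graph_def)
  have sym: "\<And>u v. E u v \<Longrightarrow> E v u" using assms(1) by (simp add: simple_graph_def)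
  have irr: "\<And>v. \<not> E v v" using assms(1) by (simp add: simple_graph_def)
  have leaf: "{u\<in>V. E w u} = {a}" if h: "a \<in> V" "E a w" "degree V E w = 1" for a w
  proof -
    obtain x where x: "{u\<in>V. E w u} = {x}" using h(3) unfolding degree_def by (auto simp: card_Suc_eq)
    have "a \<in> {u\<in>V. E w u}" using h sym by auto
    then show ?thesis using x by auto
  qed
  have key: "\<exists>w\<in>V. w \<notin> A \<and> w \<noteq> a \<and> closed_nbhd V E {w} \<subseteq> closed_nbhd V E {a}" if a: "a \<in> A" for a
  proof -
    have aV: "a \<in> V" using a assms(5) by auto
    obtain w where w: "w \<in> V" "E a w" "degree V E w = 1" using assms(6) a by blast
    have nw: "{u\<in>V. E w u} = {a}" using leaf[OF aV w(2,3)] .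
    have wa: "w \<noteq> a" using w(2) irr by auto
    have wA: "w \<notin> A"
    proof
      assume "w \<in> A"
      then obtain x where x: "x \<in> V" "E w x" "degree V E x = 1" using assms(6) by blast
      then have "x = a" using nw by auto
      then show False using assms(3) aV w x unfolding no_isolated_edges_def by blast
    qed
    have "closed_nbhd V E {w} \<subseteq> closed_nbhd V E {a}"
    proof
      fix v assume "v \<in> closed_nbhd V E {w}"
      then have "v = w \<or> (v \<in> V \<and> E v w)" unfolding closed_nbhd_def by auto
      then show "v \<in> closed_nbhd V E {a}"
      proof
        assume "v = w" then show ?thesis using w sym unfolding closed_nbhd_def by auto
      next
        assume "v \<in> V \<and> E v w"
        then have "v = a" using nw sym by auto
        then show ?thesis unfolding closed_nbhd_def by auto
      qed
    qed
    then show ?thesis using w wa wA by blast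
  qed
  have finA: "finite A" using assms(5) fin finite_subset by auto
  have gen: "finite B \<Longrightarrow> B \<subseteq> A \<Longrightarrow> (\<Sum>J\<in>Pow V. (-1) ^ card J * (\<Prod>v\<in>closed_nbhd V E J. 1 - p v))
      = (\<Sum>J\<in>Pow (V - B). (-1) ^ card J * (\<Prod>v\<in>closed_nbhd V E J. 1 - p v))" for B
  proof (induction B rule: finite_induct)
    case empty then show ?case by simp
  next
    case (insert a B)
    obtain w where w: "w \<in> V" "w \<notin> A" "w \<noteq> a" "closed_nbhd V E {w} \<subseteq> closed_nbhd V E {a}"
      using key[of a] insert.prems by blast
    have "a \<in> V - B" using insert assms(5) by auto
    moreover have "w \<in> V - B" using w insert by auto
    ultimately show ?case
      using insert cancel_step[OF fin _ _ w(3) w(4), of B "\<lambda>v. 1 - p v"] by simp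
  qed
  show ?thesis using drel_full[OF assms(1)] gen[OF finA order_refl] by simp
qed

end
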